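(* Let $x_1,\dots,x_N$ be training data points, let $f(x,\theta)$ be a loss function differentiable in the parameter $\theta$, and fix the current parameter $\theta_t$. Let $S_b \subseteq \{x_1,\dots,x_N\}$ be a random bucket (the set of data points sharing the query's hash value in the hash table probed), and, conditionally on $S_b$, let $x_m$ be an element chosen uniformly at random from $S_b$. For each $i$, let $p_i>0$ denote the probability that $x_i$ belongs to $S_b$. Define $$\mathrm{Est} = \frac{1}{N}\sum_{i=1}^N \mathbb{1}_{x_i\in S_b}\,\mathbb{1}_{(x_i = x_m \mid x_i\in S_b)}\,\frac{\nabla f(x_i,\theta_t)\cdot |S_b|}{p_i}.$$ Then $\mathrm{Est}$ is an unbiased estimator of the full gradient: $$\mathbb{E}[\mathrm{Est}] = \frac{1}{N}\sum_{i=1}^N \nabla f(x_i,\theta_t).$$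
   Context: This is the LSH-sampled gradient estimator (LGD). Data points are preprocessed into locality-sensitive hash tables; at iteration $t$ the query (built from $\theta_t$) is hashed, a hash table is probed, and the matching non-empty bucket is $S_b$. The paper writes the bucket-membership probability as $p_i = cp(x_i,\theta_t)^K\,(1-cp(x_i,\theta_t)^K)^{l-1}$, where $cp(x,\theta)=\Pr(h(x)=h(\theta))$ is the collision probability of the LSH function $h$, $K$ is the number of concatenated hash functions per table, and $l$ is the number of tables probed until a non-empty bucket was found; in the statement $p_i$ simply denotes $\Pr(x_i\in S_b)$. $\mathbb{1}_{(x_i = x_m\mid x_i\in S_b)}$ is the indicator that $x_i$ is the element selected from the bucket. *)

theory Defs
  imports "HOL-Analysis.Analysis" "HOL-Probability.Probability"
begin

definition grad :: "('p::real_inner \<Rightarrow> real) \<Rightarrow> 'p \<Rightarrow> 'p" where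
  "grad g th = (THE D. GDERIV g th :> D)"

definition bucket_sample :: "nat set pmf \<Rightarrow> (nat set \<times> nat) pmf" where
  "bucket_sample B = bind_pmf B (\<lambda>S. map_pmf (\<lambda>m. (S, m)) (pmf_of_set S))"

definition lgd_est ::
  "nat \<Rightarrow> ('x \<Rightarrow> 'p::real_inner \<Rightarrow> real) \<Rightarrow> (nat \<Rightarrow> 'x) \<Rightarrow> 'p \<Rightarrow> (nat \<Rightarrow> real) \<Rightarrow> nat set \<times> nat \<Rightarrow> 'p" where
  "lgd_est N f x th p Sm =
     (1 / real N) *\<^sub>R (\<Sum>i=1..N. (indicator (fst Sm) i * (if i = snd Sm then 1 else 0)
        * real (card (fst Sm)) / p i) *\<^sub>R grad (f (x i)) th)"

end

theory Submission imports Defs begin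

lemma pmf_bs:
  assumes fin: "\<And>S. S \<in> set_pmf B \<Longrightarrow> finite S \<and> S \<noteq> {}"
  shows "pmf (bucket_sample B) (S, m) = pmf B S * (if m \<in> S then 1 / real (card S) else 0)"
proof -
  have "pmf (bucket_sample B) (S, m) =
     (\<integral>S'. pmf (map_pmf (\<lambda>m. (S', m)) (pmf_of_set S')) (S, m) \<partial>measure_pmf B)"
    unfolding bucket_sample_def by (rule pmf_bind)
  also have "\<dots> = (\<integral>S'. (if S' = S then pmf (pmf_of_set S) m else 0) \<partial>measure_pmf B)"
  proof (rule Bochner_Integration.integral_cong[OF refl])
    fix S' show "pmf (map_pmf (\<lambda>m. (S', m)) (pmf_of_set S')) (S, m) = (if S' = S then pmf (pmf_of_set S) m else 0)"
    proof (cases "S' = S")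
      case True
      have inj: "inj (\<lambda>m. (S, m))" by (auto simp: inj_def)
      then show ?thesis using True pmf_map_inj'[OF inj, of "pmf_of_set S" m] by simp
    next
      case False
      then show ?thesis by (auto simp: pmf_eq_0_set_pmf)
    qed
  qed
  also have "\<dots> = pmf B S * pmf (pmf_of_set S) m"
    by (subst integral_measure_pmf_real[where A="{S}"]) (auto split: if_splits)
  also have "\<dots> = pmf B S * (if m \<in> S then 1 / real (card S) else 0)"
  proof (cases "S \<in> set_pmf B")
    case True then show ?thesis using fin[OF True] by (simp add: pmf_of_set)
  next
    case False then show ?thesis by (simp add: set_pmf_eq)
  qed
  finally show ?thesis .
qed

theorem theorem1:
  fixes N :: nat
    and x :: "nat \<Rightarrow> 'x"
    and f :: "'x \<Rightarrow> 'p::euclidean_space \<Rightarrow> real"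
    and th :: 'p
    and B :: "nat set pmf"
    and p :: "nat \<Rightarrow> real"
  assumes diff: "\<And>i. i \<in> {1..N} \<Longrightarrow> f (x i) differentiable (at th)"
    and bucket: "\<And>S. S \<in> set_pmf B \<Longrightarrow> S \<subseteq> {1..N} \<and> S \<noteq> {}"
    and p_def: "\<And>i. i \<in> {1..N} \<Longrightarrow> p i = measure_pmf.prob B {S. i \<in> S}"
    and p_pos: "\<And>i. i \<in> {1..N} \<Longrightarrow> p i > 0"
  shows "measure_pmf.expectation (bucket_sample B) (lgd_est N f x th p)
           = (1 / real N) *\<^sub>R (\<Sum>i=1..N. grad (f (x i)) th)"
proof -
  define G where "G i = grad (f (x i)) th" for i
  define A where "A = (SIGMA S:Pow {1..N}. S)"
  have finS: "S \<in> set_pmf B \<Longrightarrow> finite S \<and> S \<noteq> {}" for S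
    using bucket finite_subset by blast
  have finA: "finite A" unfolding A_def by (intro finite_SigmaI) (auto intro: finite_subset)
  have est: "lgd_est N f x th p (S, m) = ((1 / real N) * (real (card S) / p m)) *\<^sub>R G m"
    if "S \<subseteq> {1..N}" "m \<in> S" for S m
  proof -
    have "(\<Sum>i=1..N. (indicator S i * (if i = m then 1 else 0) * real (card S) / p i) *\<^sub>R G i)
        = (real (card S) / p m) *\<^sub>R G m"
    proof -
      have "(\<Sum>i=1..N. (indicator S i * (if i = m then 1 else 0) * real (card S) / p i) *\<^sub>R G i)
          = (\<Sum>i=1..N. if i = m then (real (card S) / p m) *\<^sub>R G m else 0)"
        by (intro sum.cong) (use that in \<open>auto simp: indicator_def\<close>)
      also have "\<dots> = (real (card S) / p m) *\<^sub>R G m" using that by auto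
      finally show ?thesis .
    qed
    then show ?thesis unfolding lgd_est_def G_def by simp
  qed
  have "measure_pmf.expectation (bucket_sample B) (lgd_est N f x th p)
      = (\<Sum>a\<in>A. pmf (bucket_sample B) a *\<^sub>R lgd_est N f x th p a)"
  proof (rule integral_measure_pmf[OF finA])
    fix a assume a: "a \<in> set_pmf (bucket_sample B)"
    obtain S m where [simp]: "a = (S, m)" by (cases a)
    from a have "pmf (bucket_sample B) (S, m) \<noteq> 0" by (simp add: set_pmf_eq)
    then have "pmf B S \<noteq> 0" "m \<in> S" by (auto simp: pmf_bs[OF finS] split: if_splits)
    then show "a \<in> A" using bucket unfolding A_def by (auto simp: set_pmf_eq)
  qed
  also have "\<dots> = (\<Sum>S\<in>Pow {1..N}. \<Sum>m\<in>S. pmf (bucket_sample B) (S, m) *\<^sub>R lgd_est N f x th p (S, m))"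
    unfolding A_def by (subst sum.Sigma) (auto intro: finite_subset)
  also have "\<dots> = (\<Sum>S\<in>Pow {1..N}. \<Sum>m\<in>S. (1 / real N) *\<^sub>R ((pmf B S / p m) *\<^sub>R G m))"
  proof (intro sum.cong refl)
    fix S m assume S: "S \<in> Pow {1..N}" and m: "m \<in> S"
    show "pmf (bucket_sample B) (S, m) *\<^sub>R lgd_est N f x th p (S, m) = (1 / real N) *\<^sub>R ((pmf B S / p m) *\<^sub>R G m)"
    proof (cases "pmf B S = 0")
      case True then show ?thesis by (simp add: pmf_bs[OF finS])
    next
      case False
      then have "S \<in> set_pmf B" by (simp add: set_pmf_eq)
      then have "card S > 0" using finS card_gt_0_iff by blast
      then show ?thesis using S m by (simp add: pmf_bs[OF finS] est)
    qed
  qed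
  also have "\<dots> = (1 / real N) *\<^sub>R (\<Sum>S\<in>Pow {1..N}. \<Sum>m\<in>{1..N}. (if m \<in> S then pmf B S / p m else 0) *\<^sub>R G m)"
  proof -
    have "(\<Sum>m\<in>S. (1 / real N) *\<^sub>R ((pmf B S / p m) *\<^sub>R G m))
       = (1 / real N) *\<^sub>R (\<Sum>m\<in>{1..N}. (if m \<in> S then pmf B S / p m else 0) *\<^sub>R G m)"
      if "S \<in> Pow {1..N}" for S
    proof -
      have "(\<Sum>m\<in>{1..N}. (if m \<in> S then pmf B S / p m else 0) *\<^sub>R G m)
          = (\<Sum>m\<in>{1..N}. if m \<in> S then (pmf B S / p m) *\<^sub>R G m else 0)"
        by (intro sum.cong) auto
      also have "\<dots> = (\<Sum>m\<in>{1..N} \<inter> S. (pmf B S / p m) *\<^sub>R G m)"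
        by (rule sum.inter_restrict[symmetric]) simp
      also have "{1..N} \<inter> S = S" using that by auto
      finally show ?thesis by (simp add: scaleR_sum_right)
    qed
    then show ?thesis by (simp add: scaleR_sum_right)
  qed
  also have "\<dots> = (1 / real N) *\<^sub>R (\<Sum>m\<in>{1..N}. ((\<Sum>S\<in>Pow {1..N}. if m \<in> S then pmf B S else 0) / p m) *\<^sub>R G m)"
  proof (subst sum.swap, intro arg_cong[where f="scaleR _"] sum.cong refl)
    fix m
    have "(\<Sum>S\<in>Pow {1..N}. (if m \<in> S then pmf B S / p m else 0) *\<^sub>R G m)
        = (\<Sum>S\<in>Pow {1..N}. (if m \<in> S then pmf B S else 0) / p m) *\<^sub>R G m"
      by (simp add: scaleR_sum_left) (intro sum.cong, auto)
    also have "\<dots> = ((\<Sum>S\<in>Pow {1..N}. if m \<in> S then pmf B S else 0) / p m) *\<^sub>R G m"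
      by (simp add: sum_divide_distrib)
    finally show "(\<Sum>S\<in>Pow {1..N}. (if m \<in> S then pmf B S / p m else 0) *\<^sub>R G m)
        = ((\<Sum>S\<in>Pow {1..N}. if m \<in> S then pmf B S else 0) / p m) *\<^sub>R G m" .
  qed
  also have "\<dots> = (1 / real N) *\<^sub>R (\<Sum>m\<in>{1..N}. G m)"
  proof -
    have "(\<Sum>S\<in>Pow {1..N}. if m \<in> S then pmf B S else 0) = p m" if m: "m \<in> {1..N}" for m
    proof -
      have "(\<Sum>S\<in>Pow {1..N}. if m \<in> S then pmf B S else 0) = sum (pmf B) {S \<in> Pow {1..N}. m \<in> S}"
        by (rule sum.inter_filter[symmetric]) simp
      also have "\<dots> = measure_pmf.prob B {S \<in> Pow {1..N}. m \<in> S}"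
        by (simp add: measure_measure_pmf_finite)
      also have "\<dots> = measure_pmf.prob B {S. m \<in> S}"
        by (rule measure_pmf.finite_measure_eq_AE) (use bucket in \<open>fastforce simp: AE_measure_pmf_iff\<close>)+
      finally show ?thesis using p_def[OF m] by simp
    qed
    then show ?thesis using p_pos by (intro arg_cong[where f="scaleR _"] sum.cong) (auto, fastforce)
  qed
  finally show ?thesis unfolding G_def .
qed

end
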